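(* For each finite set $\tau\subseteq\mathbb{S}$ of source labels, the set of graphs $\mathcal{G}^\tau_{\mathrm{gen}}$ is context-free.
   Context: Fix a countably infinite set $\mathbb{S}$ of source labels and a set $\mathbb{A}$ of edge labels with arities $\ge1$. Graphs of sort $\tau$ are isomorphism classes of finite $\mathbb{A}$-labelled hypergraphs with an injective map from $\tau$ into the vertices (sources). HR operations: constants $\mathbf{0}_\tau$ (sources only) and $\mathbf{a}_{(s_1,\ldots,s_{\#a})}$ (single $a$-edge on the $s_i$-sources); unary $\mathsf{restrict}_\tau$ (forget source labels outside $\tau$), $\mathsf{rename}_\alpha$ ($\alpha$ a finite permutation of $\mathbb{S}$, relabelling sources), binary $\parallel$ (disjoint union fusing equally labelled sources). $\mathcal{G}^\tau_{\mathrm{gen}}$ is the set of values of ground terms using only $\mathbf{0}_{\tau'}$ ($\tau'\subseteq\tau$), $\mathbf{a}_{(s_1,\ldots)}$ ($s_i\in\tau$), $\mathsf{restrict}_{\tau'}$ ($\tau'\subseteq\tau$), $\mathsf{rename}_\alpha$ ($\alpha$ fixing all elements outside $\tau$) and $\parallel$. A grammar is a finite set of rules $U\to t$ with $U$ a nonterminal and $t$ a term over HR operations whose variables are nonterminals; a set of graphs is context-free if it is the component of some nonterminal in the least solution of a grammar (terms evaluated on sets by lifting). *)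

theory Defs
  imports Main "HOL-Library.Countable"
begin

text \<open>Graphs in the paper are isomorphism classes; here a "set of graphs" is
  represented by an isomorphism-closed set of concrete well-formed graphs.
  The sort of a graph is dom (src G).\<close>

record ('s, 'a) hgraph =
  verts :: "nat set"
  edges :: "nat set"
  elab  :: "nat \<Rightarrow> 'a"
  att   :: "nat \<Rightarrow> nat list"
  src   :: "'s \<Rightarrow> nat option"

definition wf_graph :: "('a \<Rightarrow> nat) \<Rightarrow> ('s, 'a) hgraph \<Rightarrow> bool" where
  "wf_graph ar G \<longleftrightarrow> finite (verts G) \<and> finite (edges G)
     \<and> (\<forall>e\<in>edges G. set (att G e) \<subseteq> verts G \<and> length (att G e) = ar (elab G e))
     \<and> finite (dom (src G)) \<and> inj_on (src G) (dom (src G)) \<and> ran (src G) \<subseteq> verts G"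

definition graph_iso :: "('s, 'a) hgraph \<Rightarrow> ('s, 'a) hgraph \<Rightarrow> bool" where
  "graph_iso G H \<longleftrightarrow> (\<exists>f g. bij_betw f (verts G) (verts H) \<and> bij_betw g (edges G) (edges H)
     \<and> (\<forall>e\<in>edges G. elab H (g e) = elab G e \<and> att H (g e) = map f (att G e))
     \<and> (\<forall>s. src H s = map_option f (src G s)))"

definition iso_closure :: "('a \<Rightarrow> nat) \<Rightarrow> ('s, 'a) hgraph set \<Rightarrow> ('s, 'a) hgraph set" where
  "iso_closure ar X = {H. wf_graph ar H \<and> (\<exists>G\<in>X. graph_iso G H)}"

definition restrict_g :: "'s set \<Rightarrow> ('s, 'a) hgraph \<Rightarrow> ('s, 'a) hgraph" where
  "restrict_g \<tau> G = G\<lparr>src := src G |` \<tau>\<rparr>"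

text \<open>Renaming: the source labelled s becomes labelled \<alpha> s.\<close>
definition rename_g :: "('s \<Rightarrow> 's) \<Rightarrow> ('s, 'a) hgraph \<Rightarrow> ('s, 'a) hgraph" where
  "rename_g \<alpha> G = G\<lparr>src := (\<lambda>s. src G (inv \<alpha> s))\<rparr>"

text \<open>Parallel composition: disjoint union (G on even numbers, H on odd numbers),
  fusing sources with equal labels (an H-source with label s that is also a G-source
  is identified with the G-source).\<close>
definition par_g :: "('s, 'a) hgraph \<Rightarrow> ('s, 'a) hgraph \<Rightarrow> ('s, 'a) hgraph" where
  "par_g G H =
    (let hv = (\<lambda>v. if (\<exists>s. src H s = Some v \<and> src G s \<noteq> None)
                   then 2 * the (src G (THE s. src H s = Some v)) else 2 * v + 1)
     in \<lparr>verts = (\<lambda>v. 2 * v) ` verts G \<union> hv ` verts H,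
         edges = (\<lambda>e. 2 * e) ` edges G \<union> (\<lambda>e. 2 * e + 1) ` edges H,
         elab = (\<lambda>e. if even e then elab G (e div 2) else elab H (e div 2)),
         att = (\<lambda>e. if even e then map (\<lambda>v. 2 * v) (att G (e div 2)) else map hv (att H (e div 2))),
         src = (\<lambda>s. case src G s of Some v \<Rightarrow> Some (2 * v) | None \<Rightarrow> map_option hv (src H s))\<rparr>)"

datatype ('s, 'a, 'n) hrterm =
    Zero "'s set"
  | EdgeC 'a "'s list"
  | Restrict "'s set" "('s, 'a, 'n) hrterm"
  | Rename "'s \<Rightarrow> 's" "('s, 'a, 'n) hrterm"
  | Par "('s, 'a, 'n) hrterm" "('s, 'a, 'n) hrterm"
  | NT 'n

definition finite_perm :: "('s \<Rightarrow> 's) \<Rightarrow> bool" where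
  "finite_perm \<alpha> \<longleftrightarrow> bij \<alpha> \<and> finite {s. \<alpha> s \<noteq> s}"

fun valid_term :: "('a \<Rightarrow> nat) \<Rightarrow> ('s, 'a, 'n) hrterm \<Rightarrow> bool" where
  "valid_term ar (Zero \<tau>) = finite \<tau>"
| "valid_term ar (EdgeC a ss) = (length ss = ar a)"
| "valid_term ar (Restrict \<tau> t) = (finite \<tau> \<and> valid_term ar t)"
| "valid_term ar (Rename \<alpha> t) = (finite_perm \<alpha> \<and> valid_term ar t)"
| "valid_term ar (Par t u) = (valid_term ar t \<and> valid_term ar u)"
| "valid_term ar (NT U) = True"

fun eval_term :: "('a \<Rightarrow> nat) \<Rightarrow> ('n \<Rightarrow> ('s, 'a) hgraph set) \<Rightarrow> ('s, 'a, 'n) hrterm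
                    \<Rightarrow> ('s, 'a) hgraph set" where
  "eval_term ar \<nu> (Zero \<tau>) =
     {G. wf_graph ar G \<and> dom (src G) = \<tau> \<and> edges G = {} \<and> verts G = ran (src G)}"
| "eval_term ar \<nu> (EdgeC a ss) =
     {G. wf_graph ar G \<and> dom (src G) = set ss \<and> verts G = ran (src G)
         \<and> (\<exists>e. edges G = {e} \<and> elab G e = a \<and> att G e = map (\<lambda>s. the (src G s)) ss)}"
| "eval_term ar \<nu> (Restrict \<tau> t) = iso_closure ar (restrict_g \<tau> ` eval_term ar \<nu> t)"
| "eval_term ar \<nu> (Rename \<alpha> t) = iso_closure ar (rename_g \<alpha> ` eval_term ar \<nu> t)"
| "eval_term ar \<nu> (Par t u) =
     iso_closure ar {par_g G H | G H. G \<in> eval_term ar \<nu> t \<and> H \<in> eval_term ar \<nu> u}"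
| "eval_term ar \<nu> (NT U) = \<nu> U"

definition grammar :: "('a \<Rightarrow> nat) \<Rightarrow> ('n \<times> ('s, 'a, 'n) hrterm) set \<Rightarrow> bool" where
  "grammar ar R \<longleftrightarrow> finite R \<and> (\<forall>(U, t)\<in>R. valid_term ar t)"

definition least_solution :: "('a \<Rightarrow> nat) \<Rightarrow> ('n \<times> ('s, 'a, 'n) hrterm) set
                               \<Rightarrow> 'n \<Rightarrow> ('s, 'a) hgraph set" where
  "least_solution ar R =
     lfp (\<lambda>\<nu> U. \<Union> {eval_term ar \<nu> t | t. (U, t) \<in> R})"

definition context_free :: "('a \<Rightarrow> nat) \<Rightarrow> ('s, 'a) hgraph set \<Rightarrow> bool" where
  "context_free ar X \<longleftrightarrow>
     (\<exists>(R :: (nat \<times> ('s, 'a, nat) hrterm) set) U. grammar ar R \<and> least_solution ar R U = X)"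

fun gen_term :: "('a \<Rightarrow> nat) \<Rightarrow> 's set \<Rightarrow> ('s, 'a, 'n) hrterm \<Rightarrow> bool" where
  "gen_term ar \<tau> (Zero \<tau>') = (\<tau>' \<subseteq> \<tau>)"
| "gen_term ar \<tau> (EdgeC a ss) = (set ss \<subseteq> \<tau> \<and> length ss = ar a)"
| "gen_term ar \<tau> (Restrict \<tau>' t) = (\<tau>' \<subseteq> \<tau> \<and> gen_term ar \<tau> t)"
| "gen_term ar \<tau> (Rename \<alpha> t) = (finite_perm \<alpha> \<and> (\<forall>s. s \<notin> \<tau> \<longrightarrow> \<alpha> s = s) \<and> gen_term ar \<tau> t)"
| "gen_term ar \<tau> (Par t u) = (gen_term ar \<tau> t \<and> gen_term ar \<tau> u)"
| "gen_term ar \<tau> (NT U) = False"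

definition G_gen :: "('a \<Rightarrow> nat) \<Rightarrow> 's set \<Rightarrow> ('s, 'a) hgraph set" where
  "G_gen ar \<tau> = \<Union> {eval_term ar (\<lambda>_. {}) t | t :: ('s, 'a, nat) hrterm. gen_term ar \<tau> t}"

end

theory Submission
  imports Defs "HOL-Library.FuncSet"
begin

lemma iso_mono: "A \<subseteq> B \<Longrightarrow> iso_closure ar A \<subseteq> iso_closure ar B"
  unfolding iso_closure_def by blast

lemma eval_mono: "\<nu> \<le> \<nu>' \<Longrightarrow> eval_term ar \<nu> t \<subseteq> eval_term ar \<nu>' t"
proof (induction t)
  case (Restrict x1 t)
  then show ?case by (simp add: iso_mono image_mono)
next
  case (Rename x1 t)
  then show ?case by (simp add: iso_mono image_mono)
next
  case (Par t1 t2)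
  have "{par_g G H | G H. G \<in> eval_term ar \<nu> t1 \<and> H \<in> eval_term ar \<nu> t2}
     \<subseteq> {par_g G H | G H. G \<in> eval_term ar \<nu>' t1 \<and> H \<in> eval_term ar \<nu>' t2}"
    using Par by blast
  then show ?case by (simp only: eval_term.simps) (rule iso_mono)
qed (simp_all add: le_fun_def)

lemma perm_fin:
  assumes "finite \<tau>"
  shows "finite {\<alpha>::'s\<Rightarrow>'s. finite_perm \<alpha> \<and> (\<forall>s. s \<notin> \<tau> \<longrightarrow> \<alpha> s = s)}"
proof -
  let ?P = "{\<alpha>::'s\<Rightarrow>'s. finite_perm \<alpha> \<and> (\<forall>s. s \<notin> \<tau> \<longrightarrow> \<alpha> s = s)}"
  have inj: "inj_on (\<lambda>\<alpha>. restrict \<alpha> \<tau>) ?P"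
  proof (rule inj_onI)
    fix a b assume ab: "a \<in> ?P" "b \<in> ?P" and eq: "restrict a \<tau> = restrict b \<tau>"
    show "a = b"
    proof (rule ext)
      fix s
      show "a s = b s"
      proof (cases "s \<in> \<tau>")
        case True
        have "restrict a \<tau> s = restrict b \<tau> s" using eq by simp
        with True show ?thesis by simp
      next
        case False
        with ab show ?thesis by simp
      qed
    qed
  qed
  have sub: "(\<lambda>\<alpha>. restrict \<alpha> \<tau>) ` ?P \<subseteq> \<tau> \<rightarrow>\<^sub>E \<tau>"
  proof
    fix f assume "f \<in> (\<lambda>\<alpha>. restrict \<alpha> \<tau>) ` ?P"
    then obtain a where a: "a \<in> ?P" and f: "f = restrict a \<tau>" by blast
    have "a s \<in> \<tau>" if "s \<in> \<tau>" for s
    proof (rule ccontr)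
      assume "a s \<notin> \<tau>"
      then have "a (a s) = a s" using a by blast
      moreover have "inj a" using a unfolding finite_perm_def bij_def by blast
      ultimately have "a s = s" by (meson injD)
      with \<open>a s \<notin> \<tau>\<close> that show False by simp
    qed
    then show "f \<in> \<tau> \<rightarrow>\<^sub>E \<tau>" using f by auto
  qed
  have "finite (\<tau> \<rightarrow>\<^sub>E \<tau>)" using assms by (simp add: finite_PiE)
  then have "finite ((\<lambda>\<alpha>. restrict \<alpha> \<tau>) ` ?P)" using sub finite_subset by blast
  then show ?thesis using inj finite_image_iff by blast
qed

lemma Gmem: "x \<in> G_gen ar \<tau> \<longleftrightarrow> (\<exists>t::('s,'a,nat) hrterm. gen_term ar \<tau> t \<and> x \<in> eval_term ar (\<lambda>_. {}) t)"
    unfolding G_gen_def by auto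

lemma cl_Zero: "\<tau>' \<subseteq> \<tau> \<Longrightarrow> eval_term ar \<nu> (Zero \<tau>' :: ('s,'a,nat) hrterm) \<subseteq> G_gen ar \<tau>"
  by (rule subsetI, rule Gmem[THEN iffD2], rule exI[of _ "Zero \<tau>' :: ('s,'a,nat) hrterm"]) simp

lemma cl_Edge: "set ss \<subseteq> \<tau> \<Longrightarrow> length ss = ar a \<Longrightarrow> eval_term ar \<nu> (EdgeC a ss :: ('s,'a,nat) hrterm) \<subseteq> G_gen ar \<tau>"
  by (rule subsetI, rule Gmem[THEN iffD2], rule exI[of _ "EdgeC a ss :: ('s,'a,nat) hrterm"]) simp

lemma cl_Restrict: "\<tau>' \<subseteq> \<tau> \<Longrightarrow> eval_term ar (\<lambda>_. G_gen ar \<tau>) (Restrict \<tau>' (NT U) :: ('s,'a,nat) hrterm) \<subseteq> G_gen ar \<tau>"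
proof
  fix x assume r: "\<tau>' \<subseteq> \<tau>" and x: "x \<in> eval_term ar (\<lambda>_. G_gen ar \<tau>) (Restrict \<tau>' (NT U) :: ('s,'a,nat) hrterm)"
  from x obtain g where g: "g \<in> G_gen ar \<tau>" "wf_graph ar x" "graph_iso (restrict_g \<tau>' g) x"
    by (auto simp: iso_closure_def)
  then obtain t' :: "('s,'a,nat) hrterm" where t': "gen_term ar \<tau> t'" "g \<in> eval_term ar (\<lambda>_. {}) t'"
    using Gmem by blast
  have "x \<in> eval_term ar (\<lambda>_. {}) (Restrict \<tau>' t')" using g t' by (auto simp: iso_closure_def)
  moreover have "gen_term ar \<tau> (Restrict \<tau>' t')" using r t' by simp
  ultimately show "x \<in> G_gen ar \<tau>" using Gmem by blast
qed

lemma cl_Rename: "finite_perm \<alpha> \<Longrightarrow> \<forall>s. s \<notin> \<tau> \<longrightarrow> \<alpha> s = s \<Longrightarrow> eval_term ar (\<lambda>_. G_gen ar \<tau>) (Rename \<alpha> (NT U) :: ('s,'a,nat) hrterm) \<subseteq> G_gen ar \<tau>"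
proof
  fix x assume r: "finite_perm \<alpha>" "\<forall>s. s \<notin> \<tau> \<longrightarrow> \<alpha> s = s" and x: "x \<in> eval_term ar (\<lambda>_. G_gen ar \<tau>) (Rename \<alpha> (NT U) :: ('s,'a,nat) hrterm)"
  from x obtain g where g: "g \<in> G_gen ar \<tau>" "wf_graph ar x" "graph_iso (rename_g \<alpha> g) x"
    by (auto simp: iso_closure_def)
  then obtain t' :: "('s,'a,nat) hrterm" where t': "gen_term ar \<tau> t'" "g \<in> eval_term ar (\<lambda>_. {}) t'"
    using Gmem by blast
  have "x \<in> eval_term ar (\<lambda>_. {}) (Rename \<alpha> t')" using g t' by (auto simp: iso_closure_def)
  moreover have "gen_term ar \<tau> (Rename \<alpha> t')" using r t' by simp
  ultimately show "x \<in> G_gen ar \<tau>" using Gmem by blast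
qed

lemma cl_Par: "eval_term ar (\<lambda>_. G_gen ar \<tau>) (Par (NT U) (NT V) :: ('s,'a,nat) hrterm) \<subseteq> G_gen ar \<tau>"
proof
  fix x assume x: "x \<in> eval_term ar (\<lambda>_. G_gen ar \<tau>) (Par (NT U) (NT V) :: ('s,'a,nat) hrterm)"
  from x obtain g h where g: "g \<in> G_gen ar \<tau>" "h \<in> G_gen ar \<tau>" "wf_graph ar x" "graph_iso (par_g g h) x"
    by (auto simp: iso_closure_def)
  obtain t1 :: "('s,'a,nat) hrterm" where t1: "gen_term ar \<tau> t1" "g \<in> eval_term ar (\<lambda>_. {}) t1"
    using Gmem g by blast
  obtain t2 :: "('s,'a,nat) hrterm" where t2: "gen_term ar \<tau> t2" "h \<in> eval_term ar (\<lambda>_. {}) t2"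
    using Gmem g by blast
  have "x \<in> eval_term ar (\<lambda>_. {}) (Par t1 t2)" using g t1 t2 by (auto simp: iso_closure_def)
  moreover have "gen_term ar \<tau> (Par t1 t2)" using t1 t2 by simp
  ultimately show "x \<in> G_gen ar \<tau>" using Gmem by blast
qed

theorem proposition5p1:
  fixes ar :: "'a \<Rightarrow> nat" and \<tau> :: "'s::countable set"
  assumes "infinite (UNIV :: 's set)"
    and "finite (UNIV :: 'a set)"
    and "\<forall>a. ar a \<ge> 1"
    and "finite \<tau>"
  shows "context_free ar (G_gen ar \<tau>)"
proof -
  define P where "P = {\<alpha>::'s\<Rightarrow>'s. finite_perm \<alpha> \<and> (\<forall>s. s \<notin> \<tau> \<longrightarrow> \<alpha> s = s)}"
  define R :: "(nat \<times> ('s,'a,nat) hrterm) set" where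
    "R = (\<lambda>\<tau>'. (0, Zero \<tau>')) ` Pow \<tau>
       \<union> (\<Union>a. (\<lambda>ss. (0, EdgeC a ss)) ` {ss. set ss \<subseteq> \<tau> \<and> length ss = ar a})
       \<union> (\<lambda>\<tau>'. (0, Restrict \<tau>' (NT 0))) ` Pow \<tau>
       \<union> (\<lambda>\<alpha>. (0, Rename \<alpha> (NT 0))) ` P
       \<union> {(0, Par (NT 0) (NT 0))}"
  have finR: "finite R"
    unfolding R_def P_def using assms(2,4) perm_fin[OF assms(4)]
    by (auto intro!: finite_lists_length_eq)
  have validR: "\<forall>(U, t)\<in>R. valid_term ar t"
    unfolding R_def P_def using assms(4) by (auto dest: rev_finite_subset[OF assms(4)])
  define F where "F = (\<lambda>(\<nu>::nat \<Rightarrow> ('s,'a) hgraph set) U. \<Union> {eval_term ar \<nu> t | t. (U, t) \<in> R})"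
  have monoF: "mono F"
  proof (rule monoI)
    fix x y :: "nat \<Rightarrow> ('s,'a) hgraph set" assume xy: "x \<le> y"
    have "eval_term ar x t \<subseteq> eval_term ar y t" for t using eval_mono[OF xy] .
    then show "F x \<le> F y" unfolding F_def le_fun_def by blast
  qed
  define L where "L = lfp F"
  have LS: "least_solution ar R = L" unfolding L_def F_def least_solution_def by simp
  let ?G = "G_gen ar \<tau>"
  have Rchar: "(\<exists>\<tau>'. t = Zero \<tau>' \<and> \<tau>' \<subseteq> \<tau>) \<or> (\<exists>a ss. t = EdgeC a ss \<and> set ss \<subseteq> \<tau> \<and> length ss = ar a)
     \<or> (\<exists>\<tau>'. t = Restrict \<tau>' (NT 0) \<and> \<tau>' \<subseteq> \<tau>) \<or> (\<exists>\<alpha>. t = Rename \<alpha> (NT 0) \<and> \<alpha> \<in> P)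
     \<or> t = Par (NT 0) (NT 0)" if "(U, t) \<in> R" for U t
    using that unfolding R_def by (elim UnE imageE UN_E insertE emptyE; fastforce)
  note Gmem = Gmem[where ar=ar and \<tau>=\<tau>]
  have up: "L \<le> (\<lambda>_. ?G)"
    unfolding L_def
  proof (rule lfp_lowerbound)
    have H: "eval_term ar (\<lambda>_. ?G) t \<subseteq> ?G" if UR: "(U, t) \<in> R" for U t
      using Rchar[OF UR] unfolding P_def
      by (elim disjE exE conjE) (simp_all del: eval_term.simps add: cl_Zero cl_Edge cl_Restrict cl_Rename cl_Par)
    show "F (\<lambda>_. ?G) \<le> (\<lambda>_. ?G)"
      unfolding F_def le_fun_def
    proof (intro allI Union_least)
      fix U X assume "X \<in> {eval_term ar (\<lambda>_. ?G) t |t. (U, t) \<in> R}"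
      then obtain t where "(U, t) \<in> R" "X = eval_term ar (\<lambda>_. ?G) t" by blast
      then show "X \<subseteq> ?G" using H by blast
    qed
  qed
  have Lfix: "F L = L" unfolding L_def using monoF lfp_fixpoint by blast
  have inR: "eval_term ar L t \<subseteq> L 0" if "(0, t) \<in> R" for t
  proof -
    have "eval_term ar L t \<in> {eval_term ar L t |t. (0, t) \<in> R}" using that by blast
    then have "eval_term ar L t \<subseteq> F L 0" unfolding F_def by (simp add: Union_upper)
    then show ?thesis using Lfix by simp
  qed
  have down: "eval_term ar (\<lambda>_. {}) t \<subseteq> L 0" if "gen_term ar \<tau> t" for t :: "('s,'a,nat) hrterm"
    using that
  proof (induction t)
    case (Zero x)
    then have "(0, Zero x) \<in> R" unfolding R_def
      by (intro UnI1 image_eqI[where x=x]) auto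
    then show ?case using inR by fastforce
  next
    case (EdgeC a ss)
    then have "(0, EdgeC a ss) \<in> R" unfolding R_def
      by (intro UnI1 UnI2 UN_I[where a=a] image_eqI[where x=ss]) auto
    then show ?case using inR by fastforce
  next
    case (Restrict x t)
    then have "(0, Restrict x (NT 0)) \<in> R" unfolding R_def
      by (intro UnI1 UnI2 image_eqI[where x=x]) auto
    moreover have "eval_term ar (\<lambda>_. {}) (Restrict x t) \<subseteq> eval_term ar L (Restrict x (NT 0))"
      using Restrict by (simp add: iso_mono image_mono)
    ultimately show ?case using inR by blast
  next
    case (Rename x t)
    then have "(0, Rename x (NT 0)) \<in> R" unfolding R_def
      by (intro UnI1 UnI2 image_eqI[where x=x]) (auto simp: P_def)
    moreover have "eval_term ar (\<lambda>_. {}) (Rename x t) \<subseteq> eval_term ar L (Rename x (NT 0))"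
      using Rename by (simp add: iso_mono image_mono)
    ultimately show ?case using inR by blast
  next
    case (Par t1 t2)
    have "(0, Par (NT 0) (NT 0)) \<in> R" unfolding R_def by simp
    moreover have "eval_term ar (\<lambda>_. {}) (Par t1 t2) \<subseteq> eval_term ar L (Par (NT 0) (NT 0))"
      using Par by (simp, intro iso_mono) blast
    ultimately show ?case using inR by blast
  qed simp
  have "L 0 = ?G"
  proof
    show "L 0 \<subseteq> ?G" using up by (simp add: le_fun_def)
    show "?G \<subseteq> L 0"
    proof
      fix x assume "x \<in> ?G"
      then obtain t :: "('s,'a,nat) hrterm" where "gen_term ar \<tau> t" "x \<in> eval_term ar (\<lambda>_. {}) t"
        using Gmem[of x] by blast
      then show "x \<in> L 0" using down by blast
    qed
  qed
  then have "grammar ar R \<and> least_solution ar R 0 = ?G" unfolding grammar_def using finR validR LS by simp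
  then show ?thesis unfolding context_free_def by blast
qed

end
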